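(* Let $K\subseteq\mathbb{R}^d$ be a convex body, $\varepsilon>0$, $i\in I^\pm$, and let $\mathrm{Cap}_\varepsilon(p)(K_i^* )$ be any useful $\varepsilon$-cap induced by an augmented point $p\in\overline{\partial}K_i^*$. Then $\mathrm{Cap}_\varepsilon(p)(K_i^* )^\downarrow$ lies within a ball of radius $O(1)$ centered at the origin, where the constant depends only on $d$.
   Context: For a unit vector $u$, $H^+(u)$ is the closed supporting halfspace of $K$ with outer normal $u$. Let $e_1,\dots,e_d$ be the coordinate unit vectors, $e_{-j}=-e_j$, $I^\pm=\{\pm1,\dots,\pm d\}$, $V_i=\{u\in\mathbb{S}^{d-1}:\langle u,e_i\rangle\ge\langle u,e_j\rangle\ \forall j\in I^\pm,j\ne i\}$, $S_i=\bigcap_{u\in V_i}H^+(u)$. Fix $i$ and use orthonormal coordinates $(x_1,\dots,x_{d-1},y)$ in which $e_i$ is the upward $y$-direction and the $x$-coordinates are the remaining original coordinates (up to sign); $S^\downarrow$ is orthogonal projection onto $\{y=0\}\cong\mathbb{R}^{d-1}$, and $S\pm\varepsilon$ vertical translation. $K^\downarrow\oplus\alpha$ is the set of points of $\{y=0\}$ within distance $\alpha$ of $K^\downarrow$; $K_i^{(\alpha)}=\{x\in S_i:x^\downarrow\in K^\downarrow\oplus\alpha\}$, $K_i=K_i^{(2\varepsilon)}$. For a closed convex set $U$ in which every upward vertical ray from a boundary point lies in $U$ (U-shaped), $\overline{\partial}U$ is the set of boundary points with a non-vertical supporting hyperplane, each point augmented by a choice $h(q)$ of such a hyperplane. The projective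 dual of a point $p$ is the hyperplane $p^*:y=\sum_{j=1}^{d-1}p_jx_j-p_d$ (with $p^{**}=p$ for non-vertical hyperplanes); $K_i^*$ is the intersection of the closed upper halfspaces of $q^*$ for $q\in\overline{\partial}K_i$. The augmented point $q\in\overline{\partial}K_i$ with hyperplane $h(q)$ corresponds to $h(q)^*\in\overline{\partial}K_i^*$ with supporting hyperplane $q^*$. The $\varepsilon$-cap $\mathrm{Cap}_\varepsilon(p)(K_i^* )$ is the set of augmented points of $\overline{\partial}K_i^*$ in the closed lower halfspace of $h(p)+\varepsilon$. It is useful if $p$ corresponds to a point $q\in\overline{\partial}K_i$ lying on the lower boundary of $K_i^{(\varepsilon)}$. *)

theory Defs
  imports "HOL-Analysis.Analysis"
begin

text \<open>Ambient space R^d is real^'n (d = CARD('n)).\<close>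

definition convex_body :: "(real^'n) set \<Rightarrow> bool" where
  "convex_body K \<longleftrightarrow> compact K \<and> convex K \<and> interior K \<noteq> {}"

definition supp_fun :: "(real^'n) set \<Rightarrow> real^'n \<Rightarrow> real" where
  "supp_fun K u = (SUP x\<in>K. x \<bullet> u)"

definition Hplus :: "(real^'n) set \<Rightarrow> real^'n \<Rightarrow> (real^'n) set" where
  "Hplus K u = {x. x \<bullet> u \<le> supp_fun K u}"

text \<open>Signed indices I^pm: (k, True) stands for +k, (k, False) for -k.\<close>
definition evec :: "'n \<times> bool \<Rightarrow> real^'n" where
  "evec i = (if snd i then axis (fst i) 1 else - axis (fst i) 1)"

definition Vset :: "'n \<times> bool \<Rightarrow> (real^'n) set" where
  "Vset i = {u. norm u = 1 \<and> (\<forall>j. j \<noteq> i \<longrightarrow> u \<bullet> evec j \<le> u \<bullet> evec i)}"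

definition Sreg :: "(real^'n) set \<Rightarrow> 'n \<times> bool \<Rightarrow> (real^'n) set" where
  "Sreg K i = (\<Inter>u\<in>Vset i. Hplus K u)"

text \<open>Lifted frame for index i=(k,s): coordinate k is the vertical coordinate y,
  the others are the horizontal coordinates x.  The vertical coordinate is
  y = -<v, e_i>, so that S_i is U-shaped (contains upward rays).\<close>
definition frame :: "'n \<times> bool \<Rightarrow> real^'n \<Rightarrow> real^'n" where
  "frame i v = (\<chi> j. if j = fst i then - (v \<bullet> evec i) else v $ j)"

definition down :: "'n \<Rightarrow> real^'n \<Rightarrow> real^'n" where
  "down k w = (\<chi> j. if j = k then 0 else w $ j)"

definition thick :: "'n \<Rightarrow> (real^'n) set \<Rightarrow> real \<Rightarrow> (real^'n) set" where
  "thick k A \<alpha> = {z. z $ k = 0 \<and> (\<exists>a\<in>A. dist z a \<le> \<alpha>)}"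

definition Ki_alpha :: "(real^'n) set \<Rightarrow> 'n \<times> bool \<Rightarrow> real \<Rightarrow> (real^'n) set" where
  "Ki_alpha K i \<alpha> = {w \<in> frame i ` Sreg K i.
      down (fst i) w \<in> thick (fst i) (down (fst i) ` frame i ` K) \<alpha>}"

definition Ki :: "(real^'n) set \<Rightarrow> 'n \<times> bool \<Rightarrow> real \<Rightarrow> (real^'n) set" where
  "Ki K i \<epsilon> = Ki_alpha K i (2 * \<epsilon>)"

text \<open>Projective dual p* of a point p: y = sum_{j<>k} p_j x_j - p_k (vertical coordinate k).
  A non-vertical hyperplane h is represented by the unique point a with a* = h.\<close>
definition dualhyp :: "'n \<Rightarrow> real^'n \<Rightarrow> (real^'n) set" where
  "dualhyp k p = {w. w $ k = (\<Sum>j\<in>UNIV - {k}. p $ j * w $ j) - p $ k}"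

definition upper :: "'n \<Rightarrow> real^'n \<Rightarrow> (real^'n) set" where
  "upper k p = {w. w $ k \<ge> (\<Sum>j\<in>UNIV - {k}. p $ j * w $ j) - p $ k}"

definition lower :: "'n \<Rightarrow> real^'n \<Rightarrow> (real^'n) set" where
  "lower k p = {w. w $ k \<le> (\<Sum>j\<in>UNIV - {k}. p $ j * w $ j) - p $ k}"

text \<open>Augmented boundary: pairs (q, a) with q a boundary point and a* = h(q) a
  non-vertical supporting hyperplane at q.\<close>
definition aug_bd :: "'n::finite \<Rightarrow> (real^'n) set \<Rightarrow> ((real^'n) \<times> (real^'n)) set" where
  "aug_bd k U = {(q, a). q \<in> frontier U \<and> q \<in> dualhyp k a \<and>
                   (U \<subseteq> upper k a \<or> U \<subseteq> lower k a)}"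

definition Kdual :: "'n \<Rightarrow> (real^'n) set \<Rightarrow> (real^'n) set" where
  "Kdual k U = \<Inter> {upper k q | q a. (q, a) \<in> aug_bd k U}"

definition lower_bd :: "'n \<Rightarrow> (real^'n) set \<Rightarrow> (real^'n) set" where
  "lower_bd k A = {q \<in> A. \<forall>t>0. q - t *\<^sub>R axis k 1 \<notin> A}"

definition cap :: "'n \<Rightarrow> real \<Rightarrow> (real^'n) \<times> (real^'n) \<Rightarrow> (real^'n) set
                     \<Rightarrow> ((real^'n) \<times> (real^'n)) set" where
  "cap k \<epsilon> p V = {(r, b) \<in> aug_bd k V.
       r $ k \<le> (\<Sum>j\<in>UNIV - {k}. snd p $ j * r $ j) - snd p $ k + \<epsilon>}"

text \<open>Useful: p = (h(q)^*, q*) corresponds to the augmented point (q, h(q)) of the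
  augmented boundary of K_i, with q on the lower boundary of K_i^(eps).\<close>
definition useful :: "(real^'n) set \<Rightarrow> 'n \<times> bool \<Rightarrow> real \<Rightarrow> (real^'n) \<times> (real^'n) \<Rightarrow> bool" where
  "useful K i \<epsilon> p \<longleftrightarrow>
     p \<in> aug_bd (fst i) (Kdual (fst i) (Ki K i \<epsilon>)) \<and>
     (snd p, fst p) \<in> aug_bd (fst i) (Ki K i \<epsilon>) \<and>
     snd p \<in> lower_bd (fst i) (Ki_alpha K i \<epsilon>)"

end

theory Submission
  imports Defs
begin

lemma evec_inner: "u \<bullet> evec i = (if snd i then u $ fst i else - u $ fst i)"
  by (simp add: evec_def inner_axis)

lemma frame_invol: "frame i (frame i v) = v"
  by (simp add: vec_eq_iff frame_def evec_inner)

lemma frame_inner: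
  "v \<bullet> u = (\<Sum>j\<in>UNIV-{fst i}. frame i v $ j * u $ j) - frame i v $ fst i * (u \<bullet> evec i)"
proof -
  have "v \<bullet> u = (\<Sum>j\<in>UNIV. v $ j * u $ j)" by (simp add: inner_vec_def)
  also have "\<dots> = v $ fst i * u $ fst i + (\<Sum>j\<in>UNIV-{fst i}. v $ j * u $ j)"
    by (simp add: sum.remove[of UNIV "fst i"])
  also have "(\<Sum>j\<in>UNIV-{fst i}. v $ j * u $ j) = (\<Sum>j\<in>UNIV-{fst i}. frame i v $ j * u $ j)"
    by (rule sum.cong) (auto simp: frame_def)
  finally show ?thesis by (simp add: frame_def evec_inner)
qed

lemma V_props:
  assumes "u \<in> Vset i"
  shows "u \<bullet> evec i > 0" "\<And>j. j \<noteq> fst i \<Longrightarrow> \<bar>u $ j\<bar> \<le> u \<bullet> evec i"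
proof -
  have n: "norm u = 1" and le: "\<And>j. j \<noteq> i \<Longrightarrow> u \<bullet> evec j \<le> u \<bullet> evec i"
    using assms by (auto simp: Vset_def)
  show b: "\<And>j. j \<noteq> fst i \<Longrightarrow> \<bar>u $ j\<bar> \<le> u \<bullet> evec i"
  proof -
    fix j assume j: "j \<noteq> fst i"
    have "u \<bullet> evec (j, True) \<le> u \<bullet> evec i" using le j by (metis fst_conv)
    moreover have "u \<bullet> evec (j, False) \<le> u \<bullet> evec i" using le j by (metis fst_conv)
    ultimately show "\<bar>u $ j\<bar> \<le> u \<bullet> evec i" by (simp add: evec_inner)
  qed
  have c0: "u \<bullet> evec (fst i, \<not> snd i) \<le> u \<bullet> evec i" using le by (metis prod.collapse snd_conv) 
  hence ge: "u \<bullet> evec i \<ge> 0" by (auto simp: evec_inner split: if_splits)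
  show "u \<bullet> evec i > 0"
  proof (rule ccontr)
    assume "\<not> u \<bullet> evec i > 0"
    hence z: "u \<bullet> evec i = 0" using ge by simp
    have "u = 0"
    proof (subst vec_eq_iff, intro allI)
      fix j show "u $ j = 0 $ j"
      proof (cases "j = fst i")
        case True then show ?thesis using z by (auto simp: evec_inner split: if_splits)
      next
        case False then show ?thesis using b[OF False] z by simp
      qed
    qed
    then show False using n by simp
  qed
qed

lemma in_frameS:
  "w \<in> frame i ` Sreg K i \<longleftrightarrow>
   (\<forall>u\<in>Vset i. (\<Sum>j\<in>UNIV-{fst i}. w $ j * u $ j) - w $ fst i * (u \<bullet> evec i) \<le> supp_fun K u)"
proof -
  have "w \<in> frame i ` Sreg K i \<longleftrightarrow> frame i w \<in> Sreg K i"
    by (metis frame_invol image_iff)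
  also have "\<dots> \<longleftrightarrow> (\<forall>u\<in>Vset i. frame i w \<bullet> u \<le> supp_fun K u)"
    by (simp add: Sreg_def Hplus_def)
  also have "\<dots> \<longleftrightarrow> (\<forall>u\<in>Vset i. (\<Sum>j\<in>UNIV-{fst i}. w $ j * u $ j) - w $ fst i * (u \<bullet> evec i) \<le> supp_fun K u)"
    by (simp add: frame_inner[of "frame i w" _ i] frame_invol)
  finally show ?thesis .
qed

lemma V_compact: "compact (Vset i)"
proof -
  have "Vset i = sphere 0 1 \<inter> (\<Inter>j\<in>{j. j \<noteq> i}. {u. u \<bullet> (evec j - evec i) \<le> 0})"
    by (auto simp: Vset_def inner_diff_right)
  moreover have "closed (\<Inter>j\<in>{j. j \<noteq> i}. {u::real^'a. u \<bullet> (evec j - evec i) \<le> 0})"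
    by (intro closed_INT ballI) (intro closed_Collect_le continuous_intros)
  ultimately show ?thesis by (simp add: compact_Int_closed)
qed

lemma supp_lip:
  assumes "compact K" "K \<noteq> {}"
  obtains B where "B \<ge> 0" "\<And>u u'. supp_fun K u \<le> supp_fun K u' + B * norm (u - u')"
proof -
  obtain B where B: "\<forall>x\<in>K. norm x \<le> B"
    using compact_imp_bounded[OF assms(1)] bounded_iff by blast
  have B0: "B \<ge> 0" using B assms(2) by (meson all_not_in_conv norm_ge_zero order_trans)
  have bdd: "bdd_above ((\<lambda>x. x \<bullet> u) ` K)" for u
  proof
    fix y assume "y \<in> (\<lambda>x. x \<bullet> u) ` K"
    then obtain x where "x \<in> K" "y = x \<bullet> u" by auto
    then show "y \<le> B * norm u"
      using B Cauchy_Schwarz_ineq2[of x u] by (smt (verit) mult_right_mono norm_ge_zero)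
  qed
  have "supp_fun K u \<le> supp_fun K u' + B * norm (u - u')" for u u'
    unfolding supp_fun_def
  proof (rule cSUP_least[OF assms(2)])
    fix x assume x: "x \<in> K"
    have "x \<bullet> u = x \<bullet> u' + x \<bullet> (u - u')" by (simp add: inner_diff_right)
    also have "x \<bullet> (u - u') \<le> B * norm (u - u')"
      using B x Cauchy_Schwarz_ineq2[of x "u - u'"] by (smt (verit) mult_right_mono norm_ge_zero)
    moreover have "x \<bullet> u' \<le> (SUP x\<in>K. x \<bullet> u')" by (rule cSUP_upper[OF x bdd])
    ultimately show "x \<bullet> u \<le> (SUP x\<in>K. x \<bullet> u') + B * norm (u - u')" by linarith
  qed
  then show ?thesis using that B0 by blast
qed

lemma supp_cont:
  assumes "compact K" "K \<noteq> {}"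
  shows "continuous_on S (supp_fun K)"
proof -
  obtain B where B0: "B \<ge> 0" and L: "\<And>u u'. supp_fun K u \<le> supp_fun K u' + B * norm (u - u')"
    using supp_lip[OF assms] by blast
  have "B-lipschitz_on S (supp_fun K)"
  proof (rule lipschitz_onI)
    fix x y assume "x \<in> S" "y \<in> S"
    show "dist (supp_fun K x) (supp_fun K y) \<le> B * dist x y"
      using L[of x y] L[of y x] by (simp add: dist_real_def dist_norm norm_minus_commute abs_le_iff)
  qed (rule B0)
  then show ?thesis by (rule lipschitz_on_continuous_on)
qed

lemma sum_minus_if: "(\<Sum>j\<in>UNIV. if j = (k::'a::finite) then 0 else g j) = (\<Sum>j\<in>UNIV-{k}. g j)"
  by (rule sum.mono_neutral_cong_right) auto

theorem lemma12:
  shows "\<exists>C::real. \<forall>(K::(real^'n) set) (\<epsilon>::real) (i::'n \<times> bool) p.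
           convex_body K \<and> \<epsilon> > 0 \<and> useful K i \<epsilon> p \<longrightarrow>
           (\<lambda>(r, b). down (fst i) r) ` cap (fst i) \<epsilon> p (Kdual (fst i) (Ki K i \<epsilon>))
             \<subseteq> cball 0 C"
proof (rule exI[of _ "real CARD('n) + 1"], intro allI impI subsetI)
  fix K :: "(real^'n) set" and \<epsilon> :: real and i :: "'n \<times> bool" and p zz
  assume A: "convex_body K \<and> \<epsilon> > 0 \<and> useful K i \<epsilon> p"
    and zz: "zz \<in> (\<lambda>(r, b). down (fst i) r) ` cap (fst i) \<epsilon> p (Kdual (fst i) (Ki K i \<epsilon>))"
  define k where "k = fst i"
  define q where "q = snd p"
  have cK: "compact K" and Kne: "K \<noteq> {}" and e0: "\<epsilon> > 0"
    using A by (auto simp: convex_body_def)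
  obtain r b where rb: "(r, b) \<in> cap k \<epsilon> p (Kdual k (Ki K i \<epsilon>))" and zzr: "zz = down k r"
    using zz k_def by auto
  have rfr: "r \<in> frontier (Kdual k (Ki K i \<epsilon>))" and capI:
    "r $ k \<le> (\<Sum>j\<in>UNIV - {k}. q $ j * r $ j) - q $ k + \<epsilon>"
    using rb by (auto simp: cap_def aug_bd_def q_def)
  have "closed (Kdual k (Ki K i \<epsilon>))"
    unfolding Kdual_def upper_def
    by (intro closed_Inter) (auto intro!: closed_Collect_le continuous_intros)
  hence rK: "r \<in> Kdual k (Ki K i \<epsilon>)" using rfr frontier_subset_closed by blast
  have qa: "q \<in> Ki_alpha K i \<epsilon>" using A by (auto simp: useful_def lower_bd_def q_def)
  hence qS: "q \<in> frame i ` Sreg K i" and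
    "down k q \<in> thick k (down k ` frame i ` K) \<epsilon>"
    by (auto simp: Ki_alpha_def k_def)
  then obtain z0 where z0: "z0 \<in> down k ` frame i ` K" "dist (down k q) z0 \<le> \<epsilon>"
    by (auto simp: thick_def)
  define dr where "dr = down k r"
  define n where "n = norm dr"
  show "zz \<in> cball 0 (real CARD('n) + 1)"
  proof (cases "n = 0")
    case True then show ?thesis by (simp add: zzr dr_def n_def)
  next
    case False
    hence n0: "n > 0" by (simp add: n_def)
    define x' where "x' = down k q + (\<epsilon> / n) *\<^sub>R dr"
    define F where "F u = ((\<Sum>j\<in>UNIV-{k}. x' $ j * u $ j) - supp_fun K u) / (u \<bullet> evec i)" for u
    have "continuous_on (Vset i) F"
      unfolding F_def
      apply (intro continuous_intros supp_cont[OF cK Kne])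
      using V_props(1) by (metis order_less_irrefl)
    moreover have "Vset i \<noteq> {}"
    proof -
      have "evec i \<in> Vset i"
        unfolding Vset_def
      proof (intro CollectI conjI allI impI)
        show "norm (evec i) = 1" by (simp add: evec_def)
        fix j :: "'n \<times> bool" assume "j \<noteq> i"
        then show "evec i \<bullet> evec j \<le> evec i \<bullet> evec i"
          by (cases i, cases j) (auto simp: evec_def inner_axis_axis)
      qed
      then show ?thesis by blast
    qed
    ultimately obtain u' where u'V: "u' \<in> Vset i" and u'max: "\<And>u. u \<in> Vset i \<Longrightarrow> F u \<le> F u'"
      using continuous_attains_sup[OF V_compact] by blast
    define c' where "c' = u' \<bullet> evec i"
    have c'0: "c' > 0" using V_props(1)[OF u'V] by (simp add: c'_def)
    have c'b: "\<And>j. j \<noteq> k \<Longrightarrow> \<bar>u' $ j\<bar> \<le> c'" using V_props(2)[OF u'V] by (simp add: c'_def k_def)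
    define a' where "a' = (\<chi> j. if j = k then supp_fun K u' / c' else u' $ j / c')"
    define q' where "q' = x' + F u' *\<^sub>R axis k 1"
    have x'k: "x' $ k = 0" by (simp add: x'_def down_def dr_def)
    have q'k: "q' $ k = F u'" by (simp add: q'_def x'k axis_def)
    have q'j: "\<And>j. j \<noteq> k \<Longrightarrow> q' $ j = x' $ j" by (simp add: q'_def axis_def)
    have sumq': "\<And>u. (\<Sum>j\<in>UNIV-{k}. q' $ j * u $ j) = (\<Sum>j\<in>UNIV-{k}. x' $ j * u $ j)"
      by (rule sum.cong) (auto simp: q'j)
    have Fu': "(\<Sum>j\<in>UNIV-{k}. x' $ j * u' $ j) - F u' * c' = supp_fun K u'"
      using c'0 by (simp add: F_def c'_def)
    have memS: "\<And>w. w \<in> frame i ` Sreg K i \<Longrightarrow>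
        (\<Sum>j\<in>UNIV-{k}. w $ j * u' $ j) - w $ k * c' \<le> supp_fun K u'"
      using u'V by (auto simp: in_frameS k_def c'_def)
    have q'S: "q' \<in> frame i ` Sreg K i"
      unfolding in_frameS
    proof
      fix u assume uV: "u \<in> Vset i"
      have cu: "u \<bullet> evec i > 0" using V_props(1)[OF uV] .
      have "F u \<le> q' $ k" using u'max[OF uV] q'k by simp
      hence "((\<Sum>j\<in>UNIV-{k}. x' $ j * u $ j) - supp_fun K u) \<le> q' $ k * (u \<bullet> evec i)"
        using cu by (simp add: F_def pos_divide_le_eq)
      then show "(\<Sum>j\<in>UNIV-{fst i}. q' $ j * u $ j) - q' $ fst i * (u \<bullet> evec i) \<le> supp_fun K u"
        using sumq'[of u] by (simp add: k_def)
    qed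
    have downq': "down k q' = x'"
      by (simp add: vec_eq_iff down_def q'j x'k)
    have nd: "norm ((\<epsilon> / n) *\<^sub>R dr) = \<epsilon>" using n0 e0 by (simp add: n_def)
    have q'Ki: "q' \<in> Ki K i \<epsilon>"
      unfolding Ki_def Ki_alpha_def
    proof (intro CollectI conjI q'S)
      have "dist x' z0 \<le> dist x' (down k q) + dist (down k q) z0" by (rule dist_triangle)
      also have "dist x' (down k q) = \<epsilon>" using nd by (simp add: x'_def dist_norm)
      finally have "dist x' z0 \<le> 2 * \<epsilon>" using z0 by simp
      then show "down (fst i) q' \<in> thick (fst i) (down (fst i) ` frame i ` K) (2 * \<epsilon>)"
        using z0(1) downq' by (auto simp: thick_def k_def down_def)
    qed
    have q'fr: "q' \<in> frontier (Ki K i \<epsilon>)"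
      unfolding frontier_def
    proof
      show "q' \<in> closure (Ki K i \<epsilon>)" using q'Ki closure_subset by blast
      show "q' \<notin> interior (Ki K i \<epsilon>)"
      proof
        assume "q' \<in> interior (Ki K i \<epsilon>)"
        then obtain e where e: "e > 0" "ball q' e \<subseteq> Ki K i \<epsilon>"
          using mem_interior by blast
        define w where "w = q' - (e/2) *\<^sub>R axis k 1"
        have "w \<in> ball q' e" using e by (simp add: w_def dist_norm)
        hence "w \<in> frame i ` Sreg K i" using e(2) by (auto simp: Ki_def Ki_alpha_def)
        hence "(\<Sum>j\<in>UNIV-{k}. w $ j * u' $ j) - w $ k * c' \<le> supp_fun K u'" by (rule memS)
        moreover have "(\<Sum>j\<in>UNIV-{k}. w $ j * u' $ j) = (\<Sum>j\<in>UNIV-{k}. x' $ j * u' $ j)"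
          by (rule sum.cong) (auto simp: w_def q'j axis_def)
        moreover have "w $ k = F u' - e/2" by (simp add: w_def q'k axis_def)
        hence "w $ k * c' = F u' * c' - e/2 * c'" by (simp add: left_diff_distrib)
        ultimately have "supp_fun K u' + e/2 * c' \<le> supp_fun K u'"
          using Fu' by linarith
        moreover have "e/2 * c' > 0" using e c'0 by simp
        ultimately show False by linarith
      qed
    qed
    have q'dual: "q' \<in> dualhyp k a'"
    proof -
      have "(\<Sum>j\<in>UNIV - {k}. a' $ j * q' $ j) = (\<Sum>j\<in>UNIV - {k}. x' $ j * u' $ j) / c'"
        unfolding sum_divide_distrib by (rule sum.cong) (auto simp: a'_def q'j)
      then show ?thesis using c'0 by (simp add: dualhyp_def q'k F_def c'_def a'_def diff_divide_distrib)
    qed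
    have Kup: "Ki K i \<epsilon> \<subseteq> upper k a'"
    proof
      fix w assume "w \<in> Ki K i \<epsilon>"
      hence "w \<in> frame i ` Sreg K i" by (auto simp: Ki_def Ki_alpha_def)
      hence "(\<Sum>j\<in>UNIV-{k}. w $ j * u' $ j) - w $ k * c' \<le> supp_fun K u'" by (rule memS)
      hence "((\<Sum>j\<in>UNIV-{k}. w $ j * u' $ j) - supp_fun K u') / c' \<le> w $ k"
        using c'0 by (simp add: pos_divide_le_eq)
      moreover have "(\<Sum>j\<in>UNIV - {k}. a' $ j * w $ j) = (\<Sum>j\<in>UNIV - {k}. w $ j * u' $ j) / c'"
        unfolding sum_divide_distrib by (rule sum.cong) (auto simp: a'_def)
      ultimately show "w \<in> upper k a'" by (simp add: upper_def a'_def diff_divide_distrib)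
    qed
    have "(q', a') \<in> aug_bd k (Ki K i \<epsilon>)"
      using q'fr q'dual Kup by (auto simp: aug_bd_def)
    hence "r \<in> upper k q'" using rK by (auto simp: Kdual_def)
    hence rup: "r $ k \<ge> (\<Sum>j\<in>UNIV - {k}. q' $ j * r $ j) - q' $ k" by (simp add: upper_def)
    have diffj: "\<And>j. j \<noteq> k \<Longrightarrow> q' $ j - q $ j = (\<epsilon> / n) * r $ j"
      by (simp add: q'j x'_def down_def dr_def)
    have "(\<Sum>j\<in>UNIV - {k}. (q' $ j - q $ j) * r $ j) = (\<epsilon> / n) * (\<Sum>j\<in>UNIV - {k}. r $ j * r $ j)"
      unfolding sum_distrib_left by (rule sum.cong) (auto simp: diffj)
    also have "(\<Sum>j\<in>UNIV - {k}. r $ j * r $ j) = n^2"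
    proof -
      have "n^2 = dr \<bullet> dr" by (simp add: n_def power2_norm_eq_inner)
      also have "\<dots> = (\<Sum>j\<in>UNIV. if j = k then 0 else r $ j * r $ j)"
        unfolding inner_vec_def by (rule sum.cong) (auto simp: dr_def down_def)
      finally show ?thesis by (simp add: sum_minus_if)
    qed
    finally have L: "(\<Sum>j\<in>UNIV - {k}. (q' $ j - q $ j) * r $ j) = \<epsilon> * n"
      using n0 by (simp add: power2_eq_square)
    have "(\<Sum>j\<in>UNIV - {k}. (q' $ j - q $ j) * r $ j) =
          (\<Sum>j\<in>UNIV - {k}. q' $ j * r $ j) - (\<Sum>j\<in>UNIV - {k}. q $ j * r $ j)"
      by (simp add: sum_subtractf left_diff_distrib)
    hence L2: "\<epsilon> * n \<le> q' $ k - q $ k + \<epsilon>" using L rup capI by linarith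
    have qin: "(\<Sum>j\<in>UNIV-{k}. q $ j * u' $ j) - q $ k * c' \<le> supp_fun K u'" by (rule memS[OF qS])
    have "(q' $ k - q $ k) * c' \<le> (\<Sum>j\<in>UNIV-{k}. (q' $ j - q $ j) * u' $ j)"
    proof -
      have e1: "(\<Sum>j\<in>UNIV-{k}. (q' $ j - q $ j) * u' $ j) = (\<Sum>j\<in>UNIV-{k}. q' $ j * u' $ j) - (\<Sum>j\<in>UNIV-{k}. q $ j * u' $ j)"
        by (simp add: sum_subtractf left_diff_distrib)
      have e2: "(q' $ k - q $ k) * c' = F u' * c' - q $ k * c'" by (simp add: left_diff_distrib q'k)
      show ?thesis using e1 e2 qin Fu' q'k sumq'[of u'] by linarith
    qed
    also have "\<dots> \<le> (\<Sum>j\<in>UNIV-{k}. \<epsilon> * c')"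
    proof (rule sum_mono)
      fix j assume j: "j \<in> UNIV - {k}"
      have "\<bar>r $ j\<bar> \<le> n"
        using component_le_norm_cart[of dr j] j by (simp add: n_def dr_def down_def)
      hence "\<bar>q' $ j - q $ j\<bar> \<le> \<epsilon>" using j diffj[of j] n0 e0
        by (simp add: abs_mult divide_le_eq)
      moreover have "\<bar>u' $ j\<bar> \<le> c'" using c'b j by auto
      ultimately have "\<bar>(q' $ j - q $ j) * u' $ j\<bar> \<le> \<epsilon> * c'"
        by (simp add: abs_mult mult_mono)
      then show "(q' $ j - q $ j) * u' $ j \<le> \<epsilon> * c'" by simp
    qed
    also have "\<dots> \<le> real CARD('n) * \<epsilon> * c'"
    proof -
      have "card (UNIV - {k}) \<le> CARD('n)" by (simp add: card_Diff_subset)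
      then show ?thesis using e0 c'0
        by (simp add: mult_right_mono)
    qed
    finally have "q' $ k - q $ k \<le> real CARD('n) * \<epsilon>" using c'0 by simp
    moreover have "\<epsilon> * (real CARD('n) + 1) = real CARD('n) * \<epsilon> + \<epsilon>" by (simp add: distrib_left mult.commute)
    ultimately have "\<epsilon> * n \<le> \<epsilon> * (real CARD('n) + 1)" using L2 by linarith
    hence "n \<le> real CARD('n) + 1" using e0 by simp
    then show ?thesis by (simp add: zzr dr_def n_def)
  qed
qed

end
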